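(* Let $\Omega\subset\mathbb{R}^2$ be a compact convex set with nonempty interior $\Omega^\circ$, let $P\subset\Omega^\circ$ be a finite set, and let $f=G_P\mathbf{0}_\Omega$. Then every connected component of $\Omega^\circ\setminus C(f)$ whose closure does not intersect $\partial\Omega$ contains a point of $P$ in its closure.
   Context: An $\Omega$-tropical series is a function $f:\Omega\to\mathbb{R}$ such that $f\ge 0$ on $\Omega$, $f=0$ on $\partial\Omega$, and there exist coefficients $c_{ij}\in\mathbb{R}\cup\{+\infty\}$, $(i,j)\in\mathbb{Z}^2$, such that for all $(x,y)\in\Omega^\circ$, $f(x,y)=\min\{c_{ij}+ix+jy : (i,j)\in\mathbb{Z}^2\}$. Let $V(\Omega)$ denote the set of all $\Omega$-tropical series. For $f\in V(\Omega)$, the $\Omega$-tropical curve $C(f)$ is the set of points of $\Omega^\circ$ at which $f$ is not smooth (the corner locus). For a finite set $P\subset\Omega^\circ$ and $f\in V(\Omega)$, define $G_Pf(x,y)=\min\{g(x,y) : g\in V(\Omega),\ g\ge f,\ P\subset C(g)\}$ (pointwise). $\mathbf{0}_\Omega$ denotes the identically zero function on $\Omega$ (an $\Omega$-tropical series). *)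

theory Defs
  imports "HOL-Analysis.Analysis"
begin

type_synonym pt = "real \<times> real"

definition tropical_series :: "pt set \<Rightarrow> (pt \<Rightarrow> real) \<Rightarrow> bool" where
  "tropical_series \<Omega> f \<longleftrightarrow>
     (\<forall>p\<in>\<Omega>. f p \<ge> 0) \<and> (\<forall>p\<in>frontier \<Omega>. f p = 0) \<and>
     (\<exists>c :: int \<times> int \<Rightarrow> ereal. (\<forall>i j. c (i, j) \<noteq> -\<infinity>) \<and>
        (\<forall>x y. (x, y) \<in> interior \<Omega> \<longrightarrow>
           (\<exists>i j. ereal (f (x, y)) = c (i, j) + ereal (of_int i * x + of_int j * y)) \<and>
           (\<forall>i j. ereal (f (x, y)) \<le> c (i, j) + ereal (of_int i * x + of_int j * y))))"

definition V :: "pt set \<Rightarrow> (pt \<Rightarrow> real) set" where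
  "V \<Omega> = {f. tropical_series \<Omega> f}"

definition unit_dir :: "nat \<Rightarrow> pt" where
  "unit_dir k = (if k = 0 then (1, 0) else (0, 1))"

text \<open>C-infinity on an open set U: there is a family of functions D indexed by
multi-indices (lists over {0,1}), with D [] = f on U, each D alpha continuous on U, and
D (k # alpha) the partial derivative of D alpha in coordinate direction k on U.\<close>
definition smooth_on :: "pt set \<Rightarrow> (pt \<Rightarrow> real) \<Rightarrow> bool" where
  "smooth_on U f \<longleftrightarrow>
     (\<exists>D :: nat list \<Rightarrow> pt \<Rightarrow> real.
        (\<forall>p\<in>U. D [] p = f p) \<and>
        (\<forall>\<alpha>. continuous_on U (D \<alpha>)) \<and>
        (\<forall>\<alpha> k p. k \<in> {0, 1} \<longrightarrow> p \<in> U \<longrightarrow>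
           ((\<lambda>t. D \<alpha> (p + t *\<^sub>R unit_dir k)) has_real_derivative D (k # \<alpha>) p) (at 0)))"

definition tcurve :: "pt set \<Rightarrow> (pt \<Rightarrow> real) \<Rightarrow> pt set" where
  "tcurve \<Omega> f = {p \<in> interior \<Omega>.
      \<not> (\<exists>U. open U \<and> p \<in> U \<and> U \<subseteq> interior \<Omega> \<and> smooth_on U f)}"

definition G :: "pt set \<Rightarrow> pt set \<Rightarrow> (pt \<Rightarrow> real) \<Rightarrow> pt \<Rightarrow> real" where
  "G \<Omega> P f p = (if p \<in> \<Omega> then
      Inf {g p | g. g \<in> V \<Omega> \<and> (\<forall>q\<in>\<Omega>. f q \<le> g q) \<and> P \<subseteq> tcurve \<Omega> g}
    else 0)"

definition zero_fun :: "pt \<Rightarrow> real" where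
  "zero_fun = (\<lambda>_. 0)"

end

theory Submission
  imports Defs
begin


definition lin :: "int \<times> int \<Rightarrow> pt \<Rightarrow> real" where
  "lin s x = of_int (fst s) * fst x + of_int (snd s) * snd x"

definition trop :: "pt set \<Rightarrow> (int \<times> int) set \<Rightarrow> (int \<times> int \<Rightarrow> real) \<Rightarrow> (pt \<Rightarrow> real) \<Rightarrow> bool" where
  "trop \<Omega> A b g \<longleftrightarrow> (\<forall>x\<in>interior \<Omega>. (\<exists>s\<in>A. g x = b s + lin s x) \<and> (\<forall>s\<in>A. g x \<le> b s + lin s x))"

lemma lin_add: "lin s (x + y) = lin s x + lin s y"
  by (simp add: lin_def algebra_simps)
lemma lin_diff: "lin s (x - y) = lin s x - lin s y"
  by (simp add: lin_def algebra_simps)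
lemma lin_scale: "lin s (t *\<^sub>R x) = t * lin s x"
  by (simp add: lin_def algebra_simps)
lemma lin_unit0: "lin s (t *\<^sub>R unit_dir 0) = t * of_int (fst s)"
  by (simp add: lin_def unit_dir_def)
lemma lin_unit1: "lin s (t *\<^sub>R unit_dir (Suc 0)) = t * of_int (snd s)"
  by (simp add: lin_def unit_dir_def)
lemma lin_zero[simp]: "lin (0,0) x = 0"
  by (simp add: lin_def)
lemma continuous_lin: "continuous_on S (lin s)"
  unfolding lin_def by (intro continuous_intros)
lemma lin_bound: "\<bar>lin s v\<bar> \<le> (\<bar>of_int (fst s)\<bar> + \<bar>of_int (snd s)\<bar>) * norm v"
proof -
  have a: "\<bar>fst v\<bar> \<le> norm v" "\<bar>snd v\<bar> \<le> norm v"
    using norm_fst_le[of "fst v" "snd v"] norm_snd_le[of "snd v" "fst v"]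
    by simp_all
  have "\<bar>lin s v\<bar> \<le> \<bar>of_int (fst s)\<bar> * \<bar>fst v\<bar> + \<bar>of_int (snd s)\<bar> * \<bar>snd v\<bar>"
    unfolding lin_def by (metis abs_mult abs_triangle_ineq)
  also have "\<dots> \<le> \<bar>of_int (fst s)\<bar> * norm v + \<bar>of_int (snd s)\<bar> * norm v"
    using a by (intro add_mono mult_left_mono) auto
  finally show ?thesis by (simp add: algebra_simps)
qed

lemma tropical_to_trop:
  assumes "tropical_series \<Omega> g"
  shows "\<exists>A b. trop \<Omega> A b g"
proof -
  obtain c :: "int \<times> int \<Rightarrow> ereal" where cn: "\<forall>i j. c (i, j) \<noteq> -\<infinity>" and
    H: "\<forall>x y. (x, y) \<in> interior \<Omega> \<longrightarrow>
           (\<exists>i j. ereal (g (x, y)) = c (i, j) + ereal (of_int i * x + of_int j * y)) \<and>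
           (\<forall>i j. ereal (g (x, y)) \<le> c (i, j) + ereal (of_int i * x + of_int j * y))"
    using assms unfolding tropical_series_def by blast
  define A where "A = {s. c s \<noteq> \<infinity>}"
  define b where "b s = real_of_ereal (c s)" for s
  have cb: "c s = ereal (b s)" if "s \<in> A" for s
    using that cn[rule_format, of "fst s" "snd s"] unfolding A_def b_def
    by (cases "c s") auto
  have "trop \<Omega> A b g"
    unfolding trop_def
  proof
    fix x assume x: "x \<in> interior \<Omega>"
    obtain x1 x2 where xe: "x = (x1, x2)" by (cases x)
    from H[rule_format, of x1 x2] x obtain i j where
      e: "ereal (g x) = c (i, j) + ereal (of_int i * x1 + of_int j * x2)"
      and le: "\<forall>i j. ereal (g x) \<le> c (i, j) + ereal (of_int i * x1 + of_int j * x2)"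
      by (auto simp: xe)
    have "(i,j) \<in> A" using e unfolding A_def by auto
    hence "g x = b (i,j) + lin (i,j) x" using e cb[of "(i,j)"] by (simp add: lin_def xe)
    moreover have "\<forall>s\<in>A. g x \<le> b s + lin s x"
    proof
      fix s assume s: "s \<in> A"
      obtain i' j' where se: "s = (i', j')" by (cases s)
      show "g x \<le> b s + lin s x"
        using le[rule_format, of i' j'] cb[OF s] by (simp add: lin_def xe se)
    qed
    ultimately show "(\<exists>s\<in>A. g x = b s + lin s x) \<and> (\<forall>s\<in>A. g x \<le> b s + lin s x)"
      using \<open>(i,j) \<in> A\<close> by blast
  qed
  thus ?thesis by blast
qed

lemma trop_to_tropical:
  assumes "trop \<Omega> A b g" "\<forall>p\<in>\<Omega>. g p \<ge> 0" "\<forall>p\<in>frontier \<Omega>. g p = 0"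
  shows "tropical_series \<Omega> g"
proof -
  define c where "c s = (if s \<in> A then ereal (b s) else \<infinity>)" for s
  have "\<forall>x y. (x, y) \<in> interior \<Omega> \<longrightarrow>
           (\<exists>i j. ereal (g (x, y)) = c (i, j) + ereal (of_int i * x + of_int j * y)) \<and>
           (\<forall>i j. ereal (g (x, y)) \<le> c (i, j) + ereal (of_int i * x + of_int j * y))"
  proof (rule allI, rule allI, rule impI)
    fix x y assume xy: "(x, y) \<in> interior \<Omega>"
    from assms(1) xy obtain s where s: "s \<in> A" "g (x,y) = b s + lin s (x,y)"
      unfolding trop_def by blast
    have e1: "\<exists>i j. ereal (g (x, y)) = c (i, j) + ereal (of_int i * x + of_int j * y)"
      by (rule exI[of _ "fst s"], rule exI[of _ "snd s"]) (simp add: c_def s lin_def)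
    have e2: "\<forall>i j. ereal (g (x, y)) \<le> c (i, j) + ereal (of_int i * x + of_int j * y)"
    proof (intro allI)
      fix i j
      show "ereal (g (x, y)) \<le> c (i, j) + ereal (of_int i * x + of_int j * y)"
      proof (cases "(i,j) \<in> A")
        case True
        have "g (x,y) \<le> b (i,j) + lin (i,j) (x,y)" using assms(1) xy True unfolding trop_def by blast
        then show ?thesis using True by (simp add: c_def lin_def)
      next
        case False
        then show ?thesis by (simp add: c_def)
      qed
    qed
    show "(\<exists>i j. ereal (g (x, y)) = c (i, j) + ereal (of_int i * x + of_int j * y)) \<and>
           (\<forall>i j. ereal (g (x, y)) \<le> c (i, j) + ereal (of_int i * x + of_int j * y))"
      using e1 e2 by blast
  qed
  moreover have "\<forall>i j. c (i, j) \<noteq> -\<infinity>" by (simp add: c_def)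
  ultimately show ?thesis unfolding tropical_series_def using assms(2,3) by blast
qed

lemma affine_smooth:
  assumes "\<forall>x\<in>Vs. f x = c + lin s x"
  shows "smooth_on Vs f"
proof -
  define sl where "sl k = (if k = 0 then of_int (fst s) else (of_int (snd s) :: real))" for k :: nat
  define D where "D \<alpha> = (if \<alpha> = [] then (\<lambda>x. c + lin s x) else if length \<alpha> = 1 then (\<lambda>x. sl (hd \<alpha>)) else (\<lambda>x. 0))" for \<alpha> :: "nat list"
  have "\<forall>p\<in>Vs. D [] p = f p" using assms by (simp add: D_def)
  moreover have "\<forall>\<alpha>. continuous_on Vs (D \<alpha>)"
    unfolding D_def by (auto intro!: continuous_intros continuous_lin)
  moreover have "\<forall>\<alpha> k p. k \<in> {0, 1} \<longrightarrow> p \<in> Vs \<longrightarrow>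
           ((\<lambda>t. D \<alpha> (p + t *\<^sub>R unit_dir k)) has_real_derivative D (k # \<alpha>) p) (at 0)"
  proof (intro allI impI)
    fix \<alpha> k p assume k: "k \<in> {0::nat, 1}" and p: "p \<in> Vs"
    show "((\<lambda>t. D \<alpha> (p + t *\<^sub>R unit_dir k)) has_real_derivative D (k # \<alpha>) p) (at 0)"
    proof (cases "\<alpha> = []")
      case True
      have eq: "(\<lambda>t. D \<alpha> (p + t *\<^sub>R unit_dir k)) = (\<lambda>t. (c + lin s p) + t * sl k)"
        using k True by (auto simp: D_def lin_add sl_def lin_unit0 lin_unit1)
      show ?thesis unfolding eq using True
        by (auto simp: D_def intro!: derivative_eq_intros)
    next
      case False
      then show ?thesis by (auto simp: D_def intro!: derivative_eq_intros)
    qed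
  qed
  ultimately show ?thesis unfolding smooth_on_def by blast
qed

lemma tcurve_local:
  assumes "p \<in> tcurve \<Omega> f" "open W" "p \<in> W" "\<forall>x\<in>W. f' x = f x"
  shows "p \<in> tcurve \<Omega> f'"
proof -
  have pi: "p \<in> interior \<Omega>" using assms(1) by (simp add: tcurve_def)
  { fix U assume U: "open U" "p \<in> U" "U \<subseteq> interior \<Omega>" "smooth_on U f'"
    then obtain D where D: "\<forall>p\<in>U. D [] p = f' p" "\<forall>\<alpha>. continuous_on U (D \<alpha>)"
       "\<forall>\<alpha> k p. k \<in> {0, 1} \<longrightarrow> p \<in> U \<longrightarrow>
           ((\<lambda>t. D \<alpha> (p + t *\<^sub>R unit_dir k)) has_real_derivative D (k # \<alpha>) p) (at 0)"
      unfolding smooth_on_def by blast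
    have "smooth_on (U \<inter> W) f" unfolding smooth_on_def
      apply (rule exI[of _ D])
      using D assms(4) by (auto intro: continuous_on_subset)
    moreover have "open (U \<inter> W)" "p \<in> U \<inter> W" "U \<inter> W \<subseteq> interior \<Omega>" using U assms(2,3) by auto
    ultimately have False using assms(1) unfolding tcurve_def by blast
  }
  thus ?thesis using pi unfolding tcurve_def by blast
qed



lemma isCont_lin: "isCont (lin s) x"
  by (metis continuous_lin continuous_on_eq_continuous_at open_UNIV UNIV_I)

lemma trop_bound:
  assumes "trop \<Omega> A b g" "\<forall>x\<in>interior \<Omega>. 0 \<le> g x" "R > 0" "cball x R \<subseteq> interior \<Omega>" "s \<in> A"
  shows "(R/2) * (\<bar>of_int (fst s)\<bar> + \<bar>of_int (snd s)\<bar>) \<le> b s + lin s x"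
proof -
  define d where "d = ((R/2) * sgn (of_int (fst s) :: real), (R/2) * sgn (of_int (snd s) :: real))"
  have "norm d \<le> \<bar>(R/2) * sgn (of_int (fst s) :: real)\<bar> + \<bar>(R/2) * sgn (of_int (snd s) :: real)\<bar>"
    unfolding d_def by (rule order_trans[OF norm_Pair_le]) simp
  also have "\<dots> \<le> R/2 + R/2"
    using assms(3) by (intro add_mono) (auto simp: abs_mult abs_sgn_eq)
  finally have nd: "norm d \<le> R" by simp
  have y: "x - d \<in> interior \<Omega>"
    using assms(4) nd by (auto simp: dist_norm)
  have "0 \<le> g (x - d)" using assms(2) y by blast
  also have "\<dots> \<le> b s + lin s (x - d)" using assms(1,5) y unfolding trop_def by blast
  also have "lin s d = (R/2) * (\<bar>of_int (fst s)\<bar> + \<bar>of_int (snd s)\<bar>)"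
    unfolding lin_def d_def by (simp add: algebra_simps sgn_if abs_if)
  ultimately show ?thesis by (simp add: lin_diff)
qed

lemma trop_local:
  assumes tr: "trop \<Omega> A b g" and nn: "\<forall>x\<in>interior \<Omega>. 0 \<le> g x" and p: "p \<in> interior \<Omega>"
  shows "\<exists>r>0. ball p r \<subseteq> interior \<Omega> \<and>
     (\<forall>x\<in>ball p r. \<forall>s\<in>A. g x = b s + lin s x \<longrightarrow> g p = b s + lin s p) \<and> isCont g p"
proof -
  obtain e where e: "e > 0" "cball p e \<subseteq> interior \<Omega>"
    using p open_contains_cball[of "interior \<Omega>"] by auto
  define R where "R = e/2"
  have R: "R > 0" "cball p (2*R) \<subseteq> interior \<Omega>" using e by (auto simp: R_def)
  obtain s0 where s0: "s0 \<in> A" "g p = b s0 + lin s0 p" using tr p unfolding trop_def by blast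
  define Kr where "Kr = \<bar>of_int (fst s0)\<bar> + \<bar>of_int (snd s0) :: real\<bar>"
  define M where "M = g p + Kr * R"
  have bnd: "(R/2) * (\<bar>of_int (fst s)\<bar> + \<bar>of_int (snd s)\<bar>) \<le> M"
    if x: "x \<in> ball p R" and s: "s \<in> A" "g x = b s + lin s x" for x s
  proof -
    have xi: "x \<in> interior \<Omega>" using x R by (auto simp: dist_norm)
    have "cball x R \<subseteq> cball p (2*R)"
    proof
      fix y assume "y \<in> cball x R"
      hence "dist x y \<le> R" by simp
      moreover have "dist p y \<le> dist p x + dist x y" by (rule dist_triangle)
      moreover have "dist p x < R" using x by simp
      ultimately show "y \<in> cball p (2*R)" by simp
    qed
    with R have cb: "cball x R \<subseteq> interior \<Omega>" by blast
    have "(R/2) * (\<bar>of_int (fst s)\<bar> + \<bar>of_int (snd s)\<bar>) \<le> g x"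
      using trop_bound[OF tr nn R(1) cb s(1)] s(2) by simp
    also have "\<dots> \<le> b s0 + lin s0 x" using tr xi s0(1) unfolding trop_def by blast
    also have "\<dots> = g p + lin s0 (x - p)" using s0(2) by (simp add: lin_diff)
    also have "\<dots> \<le> g p + Kr * norm (x - p)"
      using lin_bound[of s0 "x - p"] unfolding Kr_def by simp
    also have "\<dots> \<le> M" unfolding M_def
      using x R(1) by (intro add_left_mono mult_left_mono) (auto simp: Kr_def dist_norm norm_minus_commute)
    finally show ?thesis .
  qed
  define N where "N = nat \<lceil>2 * M / R\<rceil>"
  define S where "S = {s\<in>A. \<bar>fst s\<bar> \<le> int N \<and> \<bar>snd s\<bar> \<le> int N}"
  have finS: "finite S"
    by (rule finite_subset[of _ "{-int N..int N} \<times> {-int N..int N}"]) (auto simp: S_def)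
  have inS: "s \<in> S" if x: "x \<in> ball p R" and s: "s \<in> A" "g x = b s + lin s x" for x s
  proof -
    have h: "(R/2) * (\<bar>of_int (fst s)\<bar> + \<bar>of_int (snd s)\<bar>) \<le> M" using bnd[OF x s] .
    hence "\<bar>of_int (fst s)\<bar> + \<bar>of_int (snd s)\<bar> \<le> 2 * M / R"
      using R(1) by (simp add: field_simps)
    also have "\<dots> \<le> of_int (int N)" unfolding N_def by linarith
    finally have "\<bar>of_int (fst s)\<bar> + \<bar>of_int (snd s)\<bar> \<le> (of_int (int N) :: real)" .
    hence "\<bar>fst s\<bar> \<le> int N" "\<bar>snd s\<bar> \<le> int N" by linarith+
    thus ?thesis using s unfolding S_def by blast
  qed
  define I where "I = {s\<in>S. g p < b s + lin s p}"
  have finI: "finite I" using finS unfolding I_def by auto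
  have ev1: "\<forall>s\<in>I. eventually (\<lambda>x. b s0 + lin s0 x < b s + lin s x) (at p)"
  proof
    fix s assume s: "s \<in> I"
    have c: "isCont (\<lambda>x. (b s + lin s x) - (b s0 + lin s0 x)) p"
      by (intro continuous_intros isCont_lin)
    have "0 < (b s + lin s p) - (b s0 + lin s0 p)" using s s0 unfolding I_def by auto
    from order_tendstoD(1)[OF c[unfolded isCont_def] this]
    show "eventually (\<lambda>x. b s0 + lin s0 x < b s + lin s x) (at p)"
      by (rule eventually_mono) simp
  qed
  have "eventually (\<lambda>x. \<forall>s\<in>I. b s0 + lin s0 x < b s + lin s x) (at p)"
    using eventually_ball_finite[OF finI ev1] .
  then obtain d where d: "d > 0" "\<forall>x. 0 < dist x p \<and> dist x p < d \<longrightarrow> (\<forall>s\<in>I. b s0 + lin s0 x < b s + lin s x)"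
    unfolding eventually_at by auto
  define r where "r = min d R"
  have r: "r > 0" using d R by (simp add: r_def)
  have ballr: "ball p r \<subseteq> interior \<Omega>" using R by (auto simp: r_def dist_commute)
  have act: "g p = b s + lin s p" if x: "x \<in> ball p r" and s: "s \<in> A" "g x = b s + lin s x" for x s
  proof (cases "x = p")
    case True then show ?thesis using s by simp
  next
    case False
    have xR: "x \<in> ball p R" using x by (simp add: r_def)
    have sS: "s \<in> S" using inS[OF xR s] .
    have xi: "x \<in> interior \<Omega>" using ballr x by blast
    have "s \<notin> I"
    proof
      assume sI: "s \<in> I"
      have "0 < dist x p" "dist x p < d" using x False by (auto simp: r_def dist_commute)
      hence "\<forall>s\<in>I. b s0 + lin s0 x < b s + lin s x" using d(2) by blast
      hence "b s0 + lin s0 x < b s + lin s x" using sI by blast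
      moreover have "g x \<le> b s0 + lin s0 x" using tr xi s0(1) unfolding trop_def by blast
      ultimately show False using s(2) by simp
    qed
    moreover have "g p \<le> b s + lin s p" using tr p s(1) unfolding trop_def by blast
    ultimately show ?thesis using sS unfolding I_def by auto
  qed
  have cont: "isCont g p"
    unfolding continuous_at_eps_delta
  proof (intro allI impI)
    fix \<epsilon> :: real assume \<epsilon>: "\<epsilon> > 0"
    define \<delta> where "\<delta> = min r (\<epsilon> / (2 * real N + 1))"
    have \<delta>: "\<delta> > 0" using r \<epsilon> by (simp add: \<delta>_def)
    have "dist (g x) (g p) < \<epsilon>" if x: "dist x p < \<delta>" for x
    proof -
      have xb: "x \<in> ball p r" using x by (simp add: \<delta>_def dist_commute)
      have xi: "x \<in> interior \<Omega>" using ballr xb by blast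
      obtain s where s: "s \<in> A" "g x = b s + lin s x" using tr xi unfolding trop_def by blast
      have sS: "s \<in> S" using inS[of x s] s xb by (simp add: r_def)
      have gp: "g p = b s + lin s p" using act[OF xb s] .
      have "\<bar>g x - g p\<bar> = \<bar>lin s (x - p)\<bar>" using s(2) gp by (simp add: lin_diff)
      also have "\<dots> \<le> (\<bar>of_int (fst s)\<bar> + \<bar>of_int (snd s)\<bar>) * norm (x - p)" by (rule lin_bound)
      also have "\<dots> \<le> (2 * real N) * norm (x - p)"
      proof (rule mult_right_mono)
        have "\<bar>fst s\<bar> \<le> int N" "\<bar>snd s\<bar> \<le> int N" using sS by (auto simp: S_def)
        then show "\<bar>of_int (fst s)\<bar> + \<bar>of_int (snd s)\<bar> \<le> 2 * real N" by linarith
      qed simp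
      also have "\<dots> \<le> (2 * real N) * \<delta>" using x by (intro mult_left_mono) (auto simp: dist_norm)
      also have "\<dots> < \<epsilon>"
      proof -
        have "(2 * real N) * \<delta> \<le> (2 * real N) * (\<epsilon> / (2 * real N + 1))"
          by (intro mult_left_mono) (auto simp: \<delta>_def)
        also have "\<dots> < \<epsilon>" using \<epsilon> by (simp add: field_simps)
        finally show ?thesis .
      qed
      finally show ?thesis by (simp add: dist_real_def)
    qed
    thus "\<exists>\<delta>>0. \<forall>x'. dist x' p < \<delta> \<longrightarrow> dist (g x') (g p) < \<epsilon>" using \<delta> by blast
  qed
  show ?thesis using r ballr act cont by blast
qed



lemma norm_unit_dir: "norm (unit_dir k) = 1"
  by (simp add: unit_dir_def)

lemma smooth_dir:
  assumes U: "open U" "p \<in> U" "smooth_on U f" and k: "k \<in> {0,1}"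
  shows "\<exists>\<kappa>>0. \<exists>d. \<forall>g a. (\<forall>x\<in>U. f x \<le> g x) \<longrightarrow> \<bar>d - a\<bar> \<ge> 1/2 \<longrightarrow>
           (\<forall>t. p + t *\<^sub>R unit_dir k \<in> U \<longrightarrow> g (p + t *\<^sub>R unit_dir k) \<le> g p + a * t) \<longrightarrow>
           f p + \<kappa> \<le> g p"
proof -
  obtain D where D1: "\<forall>p\<in>U. D [] p = f p" and
    D3: "\<forall>\<alpha> k p. k \<in> {0, 1} \<longrightarrow> p \<in> U \<longrightarrow>
           ((\<lambda>t. D \<alpha> (p + t *\<^sub>R unit_dir k)) has_real_derivative D (k # \<alpha>) p) (at 0)"
    using U(3) unfolding smooth_on_def by blast
  define e where "e = unit_dir k"
  define \<phi> where "\<phi> t = D [] (p + t *\<^sub>R e)" for t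
  define d where "d = D [k] p"
  have der: "(\<phi> has_real_derivative d) (at 0)"
    using D3 k U(2) unfolding \<phi>_def d_def e_def by blast
  hence "((\<lambda>y. (\<phi> y - \<phi> 0) / (y - 0)) \<longlongrightarrow> d) (at 0)"
    by (simp add: has_field_derivative_iff)
  from tendstoD[OF this, of "1/4"]
  have "eventually (\<lambda>y. dist ((\<phi> y - \<phi> 0) / (y - 0)) d < 1/4) (at 0)" by simp
  then obtain \<delta>1 where \<delta>1: "\<delta>1 > 0"
    "\<forall>t. 0 < dist t 0 \<and> dist t 0 < \<delta>1 \<longrightarrow> dist ((\<phi> t - \<phi> 0) / (t - 0)) d < 1/4"
    unfolding eventually_at by auto
  obtain e0 where e0: "e0 > 0" "ball p e0 \<subseteq> U" using U(1,2) open_contains_ball by blast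
  define \<delta> where "\<delta> = min \<delta>1 e0"
  have \<delta>: "\<delta> > 0" using \<delta>1 e0 by (simp add: \<delta>_def)
  have inU: "p + t *\<^sub>R e \<in> U" if "\<bar>t\<bar> < \<delta>" for t
  proof -
    have "dist p (p + t *\<^sub>R e) = \<bar>t\<bar>" by (simp add: dist_norm e_def norm_unit_dir)
    thus ?thesis using that e0 by (auto simp: \<delta>_def)
  qed
  have est: "f (p + t *\<^sub>R e) \<ge> f p + d * t - \<bar>t\<bar>/4" if t: "0 < \<bar>t\<bar>" "\<bar>t\<bar> < \<delta>" for t
  proof -
    have "dist ((\<phi> t - \<phi> 0) / (t - 0)) d < 1/4" using \<delta>1(2) t by (simp add: \<delta>_def)
    hence "\<bar>(\<phi> t - \<phi> 0) / t - d\<bar> < 1/4" by (simp add: dist_real_def)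
    hence "\<bar>(\<phi> t - \<phi> 0) / t - d\<bar> * \<bar>t\<bar> \<le> 1/4 * \<bar>t\<bar>" by (intro mult_right_mono) auto
    moreover have "\<bar>(\<phi> t - \<phi> 0) / t - d\<bar> * \<bar>t\<bar> = \<bar>\<phi> t - \<phi> 0 - d * t\<bar>"
      using t(1) by (simp add: abs_mult[symmetric] field_simps)
    ultimately have "\<bar>\<phi> t - \<phi> 0 - d * t\<bar> \<le> \<bar>t\<bar>/4" by simp
    moreover have "\<phi> t = f (p + t *\<^sub>R e)" using D1 inU[OF t(2)] unfolding \<phi>_def by blast
    moreover have "\<phi> 0 = f p" using D1 U(2) unfolding \<phi>_def by simp
    ultimately show ?thesis by linarith
  qed
  define t0 where "t0 = \<delta>/2"
  have t0: "0 < t0" "t0 < \<delta>" using \<delta> by (auto simp: t0_def)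
  have "\<forall>g a. (\<forall>x\<in>U. f x \<le> g x) \<longrightarrow> \<bar>d - a\<bar> \<ge> 1/2 \<longrightarrow>
           (\<forall>t. p + t *\<^sub>R unit_dir k \<in> U \<longrightarrow> g (p + t *\<^sub>R unit_dir k) \<le> g p + a * t) \<longrightarrow>
           f p + t0/4 \<le> g p"
  proof (intro allI impI)
    fix g a assume fg: "\<forall>x\<in>U. f x \<le> g x" and da: "\<bar>d - a\<bar> \<ge> 1/2"
      and hg: "\<forall>t. p + t *\<^sub>R unit_dir k \<in> U \<longrightarrow> g (p + t *\<^sub>R unit_dir k) \<le> g p + a * t"
    have key: "f p + d * t - \<bar>t\<bar>/4 \<le> g p + a * t" if "\<bar>t\<bar> = t0" for t
    proof -
      have "f p + d * t - \<bar>t\<bar>/4 \<le> f (p + t *\<^sub>R e)" using est[of t] that t0 by simp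
      also have "\<dots> \<le> g (p + t *\<^sub>R e)" using fg inU[of t] that t0 by simp
      also have "\<dots> \<le> g p + a * t" using hg inU[of t] that t0 unfolding e_def by simp
      finally show ?thesis .
    qed
    show "f p + t0/4 \<le> g p"
    proof (cases "d - a \<ge> 1/2")
      case True
      have "f p + d * t0 - t0/4 \<le> g p + a * t0" using key[of t0] t0 by simp
      moreover have "(d - a) * t0 \<ge> 1/2 * t0" using True t0 by (intro mult_right_mono) auto
      ultimately show ?thesis by (simp add: algebra_simps)
    next
      case False
      hence F: "a - d \<ge> 1/2" using da by linarith
      have "f p + d * (-t0) - t0/4 \<le> g p + a * (-t0)" using key[of "-t0"] t0 by simp
      moreover have "(a - d) * t0 \<ge> 1/2 * t0" using F t0 by (intro mult_right_mono) auto
      ultimately show ?thesis by (simp add: algebra_simps)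
    qed
  qed
  moreover have "t0/4 > 0" using t0 by simp
  ultimately show ?thesis by blast
qed

lemma smooth_trop_gap:
  assumes U: "open U" "p \<in> U" "U \<subseteq> interior \<Omega>" "smooth_on U f"
  shows "\<exists>\<kappa>>0. \<forall>A b g. trop \<Omega> A b g \<longrightarrow> (\<forall>x\<in>U. f x \<le> g x) \<longrightarrow>
     (\<forall>s1\<in>A. \<forall>s2\<in>A. s1 \<noteq> s2 \<longrightarrow> g p = b s1 + lin s1 p \<longrightarrow> g p = b s2 + lin s2 p \<longrightarrow> f p + \<kappa> \<le> g p)"
proof -
  obtain \<kappa>0 d0 where k0: "\<kappa>0 > 0" "\<forall>g a. (\<forall>x\<in>U. f x \<le> g x) \<longrightarrow> \<bar>d0 - a\<bar> \<ge> 1/2 \<longrightarrow>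
           (\<forall>t. p + t *\<^sub>R unit_dir 0 \<in> U \<longrightarrow> g (p + t *\<^sub>R unit_dir 0) \<le> g p + a * t) \<longrightarrow>
           f p + \<kappa>0 \<le> g p"
    using smooth_dir[OF U(1,2,4), of 0] by auto
  obtain \<kappa>1 d1 where k1: "\<kappa>1 > 0" "\<forall>g a. (\<forall>x\<in>U. f x \<le> g x) \<longrightarrow> \<bar>d1 - a\<bar> \<ge> 1/2 \<longrightarrow>
           (\<forall>t. p + t *\<^sub>R unit_dir (Suc 0) \<in> U \<longrightarrow> g (p + t *\<^sub>R unit_dir (Suc 0)) \<le> g p + a * t) \<longrightarrow>
           f p + \<kappa>1 \<le> g p"
    using smooth_dir[OF U(1,2,4), of 1] by auto
  define \<kappa> where "\<kappa> = min \<kappa>0 \<kappa>1"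
  have "\<forall>A b g. trop \<Omega> A b g \<longrightarrow> (\<forall>x\<in>U. f x \<le> g x) \<longrightarrow>
     (\<forall>s1\<in>A. \<forall>s2\<in>A. s1 \<noteq> s2 \<longrightarrow> g p = b s1 + lin s1 p \<longrightarrow> g p = b s2 + lin s2 p \<longrightarrow> f p + \<kappa> \<le> g p)"
  proof (intro allI impI ballI)
    fix A b g s1 s2 assume tr: "trop \<Omega> A b g" and fg: "\<forall>x\<in>U. f x \<le> g x"
      and s: "s1 \<in> A" "s2 \<in> A" "s1 \<noteq> s2" "g p = b s1 + lin s1 p" "g p = b s2 + lin s2 p"
    have up: "g y \<le> g p + lin s (y - p)" if "s \<in> {s1, s2}" "y \<in> U" for s y
    proof -
      have "g y \<le> b s + lin s y" using tr that U(3) s unfolding trop_def by blast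
      thus ?thesis using that s by (auto simp: lin_diff)
    qed
    show "f p + \<kappa> \<le> g p"
    proof (cases "fst s1 = fst s2")
      case False
      hence "\<bar>real_of_int (fst s1) - real_of_int (fst s2)\<bar> \<ge> 1" by linarith
      then obtain s where ss: "s \<in> {s1, s2}" "\<bar>d0 - real_of_int (fst s)\<bar> \<ge> 1/2"
      proof (cases "\<bar>d0 - real_of_int (fst s1)\<bar> \<ge> 1/2")
        case True then show ?thesis using that[of s1] by blast
      next
        case False
        hence "\<bar>d0 - real_of_int (fst s2)\<bar> \<ge> 1/2" using \<open>\<bar>real_of_int (fst s1) - real_of_int (fst s2)\<bar> \<ge> 1\<close> by linarith
        then show ?thesis using that[of s2] by blast
      qed
      have "\<forall>t. p + t *\<^sub>R unit_dir 0 \<in> U \<longrightarrow> g (p + t *\<^sub>R unit_dir 0) \<le> g p + of_int (fst s) * t"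
      proof (intro allI impI)
        fix t assume "p + t *\<^sub>R unit_dir 0 \<in> U"
        then have "g (p + t *\<^sub>R unit_dir 0) \<le> g p + lin s ((p + t *\<^sub>R unit_dir 0) - p)" using up[OF ss(1)] by blast
        then show "g (p + t *\<^sub>R unit_dir 0) \<le> g p + of_int (fst s) * t" by (simp add: lin_unit0 mult.commute)
      qed
      hence "f p + \<kappa>0 \<le> g p" using k0(2) fg ss(2) by blast
      thus ?thesis by (simp add: \<kappa>_def)
    next
      case True
      hence "snd s1 \<noteq> snd s2" using s(3) by (simp add: prod_eq_iff)
      hence "\<bar>real_of_int (snd s1) - real_of_int (snd s2)\<bar> \<ge> 1" by linarith
      then obtain s where ss: "s \<in> {s1, s2}" "\<bar>d1 - real_of_int (snd s)\<bar> \<ge> 1/2"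
      proof (cases "\<bar>d1 - real_of_int (snd s1)\<bar> \<ge> 1/2")
        case True then show ?thesis using that[of s1] by blast
      next
        case False
        hence "\<bar>d1 - real_of_int (snd s2)\<bar> \<ge> 1/2" using \<open>\<bar>real_of_int (snd s1) - real_of_int (snd s2)\<bar> \<ge> 1\<close> by linarith
        then show ?thesis using that[of s2] by blast
      qed
      have "\<forall>t. p + t *\<^sub>R unit_dir (Suc 0) \<in> U \<longrightarrow> g (p + t *\<^sub>R unit_dir (Suc 0)) \<le> g p + of_int (snd s) * t"
      proof (intro allI impI)
        fix t assume "p + t *\<^sub>R unit_dir (Suc 0) \<in> U"
        then have "g (p + t *\<^sub>R unit_dir (Suc 0)) \<le> g p + lin s ((p + t *\<^sub>R unit_dir (Suc 0)) - p)" using up[OF ss(1)] by blast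
        then show "g (p + t *\<^sub>R unit_dir (Suc 0)) \<le> g p + of_int (snd s) * t" by (simp add: lin_unit1 mult.commute)
      qed
      hence "f p + \<kappa>1 \<le> g p" using k1(2) fg ss(2) by blast
      thus ?thesis by (simp add: \<kappa>_def)
    qed
  qed
  moreover have "\<kappa> > 0" using k0 k1 by (simp add: \<kappa>_def)
  ultimately show ?thesis by blast
qed

lemma trop_two_tcurve:
  assumes tr: "trop \<Omega> A b g" and q: "q \<in> interior \<Omega>"
    and s: "s1 \<in> A" "s2 \<in> A" "s1 \<noteq> s2" "g q = b s1 + lin s1 q" "g q = b s2 + lin s2 q"
  shows "q \<in> tcurve \<Omega> g"
proof (rule ccontr)
  assume "q \<notin> tcurve \<Omega> g"
  then obtain U where U: "open U" "q \<in> U" "U \<subseteq> interior \<Omega>" "smooth_on U g"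
    using q unfolding tcurve_def by blast
  from smooth_trop_gap[OF U] obtain \<kappa> where "\<kappa> > 0" and
    "\<forall>A b ga. trop \<Omega> A b ga \<longrightarrow> (\<forall>x\<in>U. g x \<le> ga x) \<longrightarrow>
     (\<forall>s1\<in>A. \<forall>s2\<in>A. s1 \<noteq> s2 \<longrightarrow> ga q = b s1 + lin s1 q \<longrightarrow> ga q = b s2 + lin s2 q \<longrightarrow> g q + \<kappa> \<le> ga q)"
    by blast
  hence "g q + \<kappa> \<le> g q"
    using s by (meson order_refl tr)
  thus False using \<open>\<kappa> > 0\<close> by simp
qed

lemma trop_unique_affine:
  assumes tr: "trop \<Omega> A b g" and nn: "\<forall>x\<in>interior \<Omega>. 0 \<le> g x" and q: "q \<in> interior \<Omega>"
    and s0: "s0 \<in> A" "g q = b s0 + lin s0 q"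
    and uniq: "\<forall>s\<in>A. g q = b s + lin s q \<longrightarrow> s = s0"
  shows "\<exists>r>0. ball q r \<subseteq> interior \<Omega> \<and> (\<forall>x\<in>ball q r. g x = b s0 + lin s0 x)"
proof -
  obtain r where r: "r > 0" "ball q r \<subseteq> interior \<Omega>"
    "\<forall>x\<in>ball q r. \<forall>s\<in>A. g x = b s + lin s x \<longrightarrow> g q = b s + lin s q"
    using trop_local[OF tr nn q] by blast
  have "g x = b s0 + lin s0 x" if x: "x \<in> ball q r" for x
  proof -
    obtain s where s: "s \<in> A" "g x = b s + lin s x" using tr x r(2) unfolding trop_def by blast
    hence "s = s0" using r(3) x uniq by blast
    thus ?thesis using s by simp
  qed
  thus ?thesis using r by blast
qed

lemma tcurve_two:
  assumes tr: "trop \<Omega> A b g" and nn: "\<forall>x\<in>interior \<Omega>. 0 \<le> g x" and q: "q \<in> tcurve \<Omega> g"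
  shows "\<exists>s1\<in>A. \<exists>s2\<in>A. s1 \<noteq> s2 \<and> g q = b s1 + lin s1 q \<and> g q = b s2 + lin s2 q"
proof (rule ccontr)
  assume H: "\<not> ?thesis"
  have qi: "q \<in> interior \<Omega>" using q by (simp add: tcurve_def)
  obtain s0 where s0: "s0 \<in> A" "g q = b s0 + lin s0 q" using tr qi unfolding trop_def by blast
  have uniq: "\<forall>s\<in>A. g q = b s + lin s q \<longrightarrow> s = s0" using H s0 by blast
  obtain r where r: "r > 0" "ball q r \<subseteq> interior \<Omega>" "\<forall>x\<in>ball q r. g x = b s0 + lin s0 x"
    using trop_unique_affine[OF tr nn qi s0 uniq] by blast
  have "smooth_on (ball q r) g" using affine_smooth r(3) by blast
  moreover have "open (ball q r)" "q \<in> ball q r" using r(1) by auto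
  ultimately show False using q r(2) unfolding tcurve_def by blast
qed



lemma inf_trop:
  assumes Fne: "F \<noteq> {}"
    and tr: "\<forall>g\<in>F. trop \<Omega> (AA g) (bb g) g \<and> (\<forall>x\<in>interior \<Omega>. 0 \<le> g x)"
    and fdef: "\<forall>x\<in>interior \<Omega>. f x = Inf ((\<lambda>g. g x) ` F)"
    and ine: "interior \<Omega> \<noteq> {}"
  shows "trop \<Omega> (\<Union>g\<in>F. AA g) (\<lambda>s. Inf ((\<lambda>g. bb g s) ` {g\<in>F. s \<in> AA g})) f"
proof -
  define Af where "Af = (\<Union>g\<in>F. AA g)"
  define bf where "bf s = Inf ((\<lambda>g. bb g s) ` {g\<in>F. s \<in> AA g})" for s
  obtain y0 where y0: "y0 \<in> interior \<Omega>" using ine by blast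
  have bddb: "bdd_below ((\<lambda>g. bb g s) ` {g\<in>F. s \<in> AA g})" for s
  proof (rule bdd_belowI[of _ "- lin s y0"])
    fix z assume "z \<in> (\<lambda>g. bb g s) ` {g\<in>F. s \<in> AA g}"
    then obtain g where g: "g \<in> F" "s \<in> AA g" "z = bb g s" by blast
    have "0 \<le> g y0" using tr g y0 by blast
    also have "\<dots> \<le> bb g s + lin s y0" using tr g y0 unfolding trop_def by blast
    finally show "- lin s y0 \<le> z" using g by simp
  qed
  have bfle: "bf s \<le> bb g s" if "g \<in> F" "s \<in> AA g" for g s
    unfolding bf_def using that by (intro cInf_lower bddb) auto
  have bddx: "bdd_below ((\<lambda>g. g x) ` F)" if "x \<in> interior \<Omega>" for x
    by (rule bdd_belowI[of _ 0]) (use tr that in auto)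
  have fle: "f x \<le> g x" if "x \<in> interior \<Omega>" "g \<in> F" for x g
    using fdef that by (auto intro!: cInf_lower bddx)
  have "\<forall>x\<in>interior \<Omega>. (\<exists>s\<in>Af. f x = bf s + lin s x) \<and> (\<forall>s\<in>Af. f x \<le> bf s + lin s x)"
  proof
    fix x assume x: "x \<in> interior \<Omega>"
    have up: "\<forall>s\<in>Af. f x \<le> bf s + lin s x"
    proof
      fix s assume s: "s \<in> Af"
      have "f x - lin s x \<le> bf s" unfolding bf_def
      proof (rule cInf_greatest)
        show "(\<lambda>g. bb g s) ` {g\<in>F. s \<in> AA g} \<noteq> {}" using s by (auto simp: Af_def)
        fix z assume "z \<in> (\<lambda>g. bb g s) ` {g\<in>F. s \<in> AA g}"
        then obtain g where g: "g \<in> F" "s \<in> AA g" "z = bb g s" by blast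
        have "f x \<le> g x" using fle x g by blast
        also have "\<dots> \<le> bb g s + lin s x" using tr g x unfolding trop_def by blast
        finally show "f x - lin s x \<le> z" using g by simp
      qed
      thus "f x \<le> bf s + lin s x" by simp
    qed
    obtain R where R: "R > 0" "cball x R \<subseteq> interior \<Omega>"
      using x open_contains_cball[of "interior \<Omega>"] by auto
    define N where "N = nat \<lceil>2 * (f x + 1) / R\<rceil>"
    define T where "T = {s\<in>Af. \<bar>fst s\<bar> \<le> int N \<and> \<bar>snd s\<bar> \<le> int N}"
    have finT: "finite T"
      by (rule finite_subset[of _ "{-int N..int N} \<times> {-int N..int N}"]) (auto simp: T_def)
    have inT: "s \<in> T" if g: "g \<in> F" "g x < f x + 1" and s: "s \<in> AA g" "g x = bb g s + lin s x" for g s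
    proof -
      have "(R/2) * (\<bar>of_int (fst s)\<bar> + \<bar>of_int (snd s)\<bar>) \<le> bb g s + lin s x"
        using trop_bound[of \<Omega> "AA g" "bb g" g R x s] tr g R s by blast
      hence "(R/2) * (\<bar>of_int (fst s)\<bar> + \<bar>of_int (snd s)\<bar>) \<le> f x + 1" using s g by simp
      hence "\<bar>of_int (fst s)\<bar> + \<bar>of_int (snd s)\<bar> \<le> 2 * (f x + 1) / R"
        using R(1) by (simp add: field_simps)
      also have "\<dots> \<le> of_int (int N)" unfolding N_def by linarith
      finally have "\<bar>of_int (fst s)\<bar> + \<bar>of_int (snd s)\<bar> \<le> (of_int (int N) :: real)" .
      hence "\<bar>fst s\<bar> \<le> int N" "\<bar>snd s\<bar> \<le> int N" by linarith+
      thus ?thesis using s g unfolding T_def Af_def by blast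
    qed
    have ex_below: "\<exists>g\<in>F. g x < a" if "f x < a" for a
    proof -
      have "Inf ((\<lambda>g. g x) ` F) < a" using that fdef x by simp
      then show ?thesis using cInf_less_iff[OF _ bddx[OF x], of a] Fne by auto
    qed
    have "\<exists>s\<in>Af. f x = bf s + lin s x"
    proof (rule ccontr)
      assume H: "\<not> ?thesis"
      have lt: "\<forall>s\<in>T. f x < bf s + lin s x" using H up unfolding T_def by force
      obtain g0 where g0: "g0 \<in> F" "g0 x < f x + 1" using ex_below[of "f x + 1"] by auto
      obtain s0 where s0: "s0 \<in> AA g0" "g0 x = bb g0 s0 + lin s0 x" using tr g0 x unfolding trop_def by blast
      have Tne: "T \<noteq> {}" using inT[OF g0 s0] by blast
      define \<mu> where "\<mu> = Min ((\<lambda>s. bf s + lin s x) ` T)"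
      have "f x < \<mu>" unfolding \<mu>_def using finT Tne lt by (simp add: Min_gr_iff)
      then obtain g where g: "g \<in> F" "g x < min \<mu> (f x + 1)" using ex_below[of "min \<mu> (f x + 1)"] by auto
      obtain s where s: "s \<in> AA g" "g x = bb g s + lin s x" using tr g x unfolding trop_def by blast
      have sT: "s \<in> T" using inT[of g s] g s by simp
      have "\<mu> \<le> bf s + lin s x" unfolding \<mu>_def using finT sT by simp
      also have "\<dots> \<le> bb g s + lin s x" using bfle g s by simp
      also have "\<dots> = g x" using s by simp
      finally show False using g by simp
    qed
    thus "(\<exists>s\<in>Af. f x = bf s + lin s x) \<and> (\<forall>s\<in>Af. f x \<le> bf s + lin s x)" using up by blast
  qed
  thus ?thesis unfolding trop_def Af_def bf_def by simp
qed

lemma inf_tcurve: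
  assumes Fne: "F \<noteq> {}"
    and tr: "\<forall>g\<in>F. trop \<Omega> (AA g) (bb g) g \<and> (\<forall>x\<in>interior \<Omega>. 0 \<le> g x)"
    and fdef: "\<forall>x\<in>interior \<Omega>. f x = Inf ((\<lambda>g. g x) ` F)"
    and p: "p \<in> interior \<Omega>" "\<forall>g\<in>F. p \<in> tcurve \<Omega> g"
  shows "p \<in> tcurve \<Omega> f"
proof (rule ccontr)
  assume "p \<notin> tcurve \<Omega> f"
  then obtain U where U: "open U" "p \<in> U" "U \<subseteq> interior \<Omega>" "smooth_on U f"
    using p unfolding tcurve_def by blast
  obtain \<kappa> where \<kappa>: "\<kappa> > 0" "\<forall>A b g. trop \<Omega> A b g \<longrightarrow> (\<forall>x\<in>U. f x \<le> g x) \<longrightarrow>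
     (\<forall>s1\<in>A. \<forall>s2\<in>A. s1 \<noteq> s2 \<longrightarrow> g p = b s1 + lin s1 p \<longrightarrow> g p = b s2 + lin s2 p \<longrightarrow> f p + \<kappa> \<le> g p)"
    using smooth_trop_gap[OF U] by blast
  have bddx: "bdd_below ((\<lambda>g. g x) ` F)" if "x \<in> interior \<Omega>" for x
    by (rule bdd_belowI[of _ 0]) (use tr that in auto)
  have fle: "f x \<le> g x" if "x \<in> interior \<Omega>" "g \<in> F" for x g
    using fdef that by (auto intro!: cInf_lower bddx)
  have "f p + \<kappa> \<le> g p" if g: "g \<in> F" for g
  proof -
    have trg: "trop \<Omega> (AA g) (bb g) g" and nn: "\<forall>x\<in>interior \<Omega>. 0 \<le> g x" using tr g by auto
    obtain s1 s2 where s: "s1 \<in> AA g" "s2 \<in> AA g" "s1 \<noteq> s2" "g p = bb g s1 + lin s1 p" "g p = bb g s2 + lin s2 p"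
      using tcurve_two[OF trg nn] p g by blast
    have "\<forall>x\<in>U. f x \<le> g x" using fle U(3) g by blast
    thus ?thesis using \<kappa>(2) trg s by blast
  qed
  hence "f p + \<kappa> \<le> Inf ((\<lambda>g. g p) ` F)" using Fne by (intro cInf_greatest) auto
  thus False using fdef p \<kappa>(1) by simp
qed

lemma const_case:
  assumes "compact \<Omega>" "convex \<Omega>" "interior \<Omega> \<noteq> {}" "\<forall>x\<in>interior \<Omega>. f x = c"
  shows "\<forall>U\<in>components (interior \<Omega> - tcurve \<Omega> f). closure U \<inter> frontier \<Omega> \<noteq> {}"
proof -
  have "tcurve \<Omega> f = {}"
  proof -
    have "smooth_on (interior \<Omega>) f" using assms(4) by (intro affine_smooth[of _ _ c "(0,0)"]) simp
    thus ?thesis unfolding tcurve_def by auto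
  qed
  moreover have "components (interior \<Omega>) = {interior \<Omega>}"
    using assms(2,3) by (simp add: components_eq_sing_iff convex_connected convex_interior)
  moreover have "closure (interior \<Omega>) = \<Omega>"
    using assms(1,2,3) by (simp add: convex_closure_interior compact_imp_closed)
  moreover have "frontier \<Omega> \<noteq> {}"
  proof (rule frontier_not_empty)
    show "\<Omega> \<noteq> {}" using assms(3) interior_subset by blast
    show "\<Omega> \<noteq> UNIV" using assms(1) compact_imp_bounded not_bounded_UNIV by blast
  qed
  moreover have "frontier \<Omega> \<subseteq> \<Omega>" using assms(1) by (simp add: compact_imp_closed frontier_subset_closed)
  ultimately show ?thesis by auto
qed



theorem mainTheorem2:
  fixes \<Omega> P :: "(real \<times> real) set" and f :: "real \<times> real \<Rightarrow> real"
  assumes "compact \<Omega>" and "convex \<Omega>" and "interior \<Omega> \<noteq> {}"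
    and "finite P" and "P \<subseteq> interior \<Omega>"
    and "f = G \<Omega> P zero_fun"
  shows "\<forall>U \<in> components (interior \<Omega> - tcurve \<Omega> f).
           closure U \<inter> frontier \<Omega> = {} \<longrightarrow> closure U \<inter> P \<noteq> {}"
proof (intro ballI impI)
  fix U assume Ucomp: "U \<in> components (interior \<Omega> - tcurve \<Omega> f)"
    and Ufr: "closure U \<inter> frontier \<Omega> = {}"
  note cpt = assms(1) and cvx = assms(2) and ine = assms(3) and finP = assms(4) and Pint = assms(5)
  have clo: "closed \<Omega>" using cpt by (simp add: compact_imp_closed)
  have intsub: "interior \<Omega> \<subseteq> \<Omega>" by (rule interior_subset)
  have clint: "closure (interior \<Omega>) = \<Omega>"
    using cvx ine clo by (simp add: convex_closure_interior closure_closed)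
  have frint: "frontier \<Omega> = \<Omega> - interior \<Omega>" using clo by (simp add: frontier_def closure_closed)
  define F where "F = {g. g \<in> V \<Omega> \<and> (\<forall>q\<in>\<Omega>. zero_fun q \<le> g q) \<and> P \<subseteq> tcurve \<Omega> g}"
  have fG: "\<forall>x\<in>\<Omega>. f x = Inf ((\<lambda>g. g x) ` F)"
  proof
    fix x assume x: "x \<in> \<Omega>"
    have "{g x |g. g \<in> V \<Omega> \<and> (\<forall>q\<in>\<Omega>. zero_fun q \<le> g q) \<and> P \<subseteq> tcurve \<Omega> g} = (\<lambda>g. g x) ` F"
      unfolding F_def by blast
    thus "f x = Inf ((\<lambda>g. g x) ` F)" using x by (simp add: assms(6) G_def)
  qed
  show "closure U \<inter> P \<noteq> {}"
  proof (cases "F = {}")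
    case True
    have "\<forall>x\<in>interior \<Omega>. f x = Inf {}" using fG True intsub by auto
    from const_case[OF cpt cvx ine this] Ucomp Ufr show ?thesis by blast
  next
    case Fne: False
    have gprop: "tropical_series \<Omega> g" "\<forall>q\<in>\<Omega>. 0 \<le> g q" "P \<subseteq> tcurve \<Omega> g" if "g \<in> F" for g
      using that by (auto simp: F_def V_def zero_fun_def)
    have "\<forall>g\<in>F. \<exists>Ab. trop \<Omega> (fst Ab) (snd Ab) g"
      using gprop(1) tropical_to_trop by fastforce
    then obtain h where h: "\<forall>g\<in>F. trop \<Omega> (fst (h g)) (snd (h g)) g" by (metis bchoice)
    define AA where "AA g = fst (h g)" for g
    define bb where "bb g = snd (h g)" for g
    have trF: "\<forall>g\<in>F. trop \<Omega> (AA g) (bb g) g \<and> (\<forall>x\<in>interior \<Omega>. 0 \<le> g x)"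
      using h gprop(2) intsub unfolding AA_def bb_def by blast
    define Af where "Af = (\<Union>g\<in>F. AA g)"
    define bf where "bf s = Inf ((\<lambda>g. bb g s) ` {g\<in>F. s \<in> AA g})" for s
    have fGi: "\<forall>x\<in>interior \<Omega>. f x = Inf ((\<lambda>g. g x) ` F)" using fG intsub by blast
    have trf: "trop \<Omega> Af bf f"
      unfolding Af_def bf_def using inf_trop[OF Fne trF fGi ine] .
    have bddx: "bdd_below ((\<lambda>g. g x) ` F)" if "x \<in> \<Omega>" for x
      by (rule bdd_belowI[of _ 0]) (use gprop that in auto)
    have fle: "f x \<le> g x" if "x \<in> \<Omega>" "g \<in> F" for x g
      using fG that by (auto intro!: cInf_lower bddx)
    have fnn: "0 \<le> f x" if "x \<in> \<Omega>" for x
      using fG that Fne gprop(2) by (auto intro!: cInf_greatest)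
    have fnni: "\<forall>x\<in>interior \<Omega>. 0 \<le> f x" using fnn intsub by blast
    have ffr: "f x = 0" if "x \<in> frontier \<Omega>" for x
    proof -
      have "\<forall>g\<in>F. g x = 0" using gprop(1) that unfolding tropical_series_def by blast
      hence "(\<lambda>g. g x) ` F = {0}" using Fne by auto
      moreover have "x \<in> \<Omega>" using that frint by blast
      ultimately show ?thesis using fG by simp
    qed
    have PC: "P \<subseteq> tcurve \<Omega> f"
    proof
      fix p assume p: "p \<in> P"
      show "p \<in> tcurve \<Omega> f"
        by (rule inf_tcurve[OF Fne trF fGi]) (use p Pint gprop(3) in auto)
    qed
    define W where "W = interior \<Omega> - tcurve \<Omega> f"
    have Wopen: "open W"
    proof (subst open_subopen, intro ballI)
      fix q assume q: "q \<in> W"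
      then obtain Ob where Ob: "open Ob" "q \<in> Ob" "Ob \<subseteq> interior \<Omega>" "smooth_on Ob f"
        unfolding W_def tcurve_def by blast
      have "Ob \<subseteq> W" using Ob unfolding W_def tcurve_def by blast
      thus "\<exists>T. open T \<and> q \<in> T \<and> T \<subseteq> W" using Ob by blast
    qed
    have Uc: "U \<in> components W" using Ucomp by (simp add: W_def)
    have Uopen: "open U" using open_components[OF Wopen Uc] .
    have UW: "U \<subseteq> W" using Uc by (rule in_components_subset)
    have Ucon: "connected U" using Uc by (rule in_components_connected)
    obtain u0 where u0: "u0 \<in> U" using in_components_nonempty[OF Uc] by blast
    have uniqW: "\<forall>s\<in>Af. \<forall>s'\<in>Af. f q = bf s + lin s q \<longrightarrow> f q = bf s' + lin s' q \<longrightarrow> s = s'"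
      if q: "q \<in> W" for q
    proof (intro ballI impI, rule ccontr)
      fix s s' assume "s \<in> Af" "s' \<in> Af" "f q = bf s + lin s q" "f q = bf s' + lin s' q" "s \<noteq> s'"
      moreover have "q \<in> interior \<Omega>" using q unfolding W_def by blast
      ultimately have "q \<in> tcurve \<Omega> f" using trop_two_tcurve[OF trf] by blast
      thus False using q unfolding W_def by blast
    qed
    define \<sigma> where "\<sigma> q = (SOME s. s \<in> Af \<and> f q = bf s + lin s q)" for q
    have \<sigma>: "\<sigma> q \<in> Af" "f q = bf (\<sigma> q) + lin (\<sigma> q) q" if "q \<in> interior \<Omega>" for q
    proof -
      have "\<exists>s. s \<in> Af \<and> f q = bf s + lin s q" using trf that unfolding trop_def by blast
      from someI_ex[OF this] show "\<sigma> q \<in> Af" "f q = bf (\<sigma> q) + lin (\<sigma> q) q"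
        unfolding \<sigma>_def by blast+
    qed
    have Wint: "W \<subseteq> interior \<Omega>" unfolding W_def by blast
    have loc: "\<exists>r>0. ball q r \<subseteq> interior \<Omega> \<and> (\<forall>x\<in>ball q r. f x = bf (\<sigma> q) + lin (\<sigma> q) x)"
      if q: "q \<in> W" for q
    proof (rule trop_unique_affine[OF trf fnni])
      show "q \<in> interior \<Omega>" using q Wint by blast
      show "\<sigma> q \<in> Af" "f q = bf (\<sigma> q) + lin (\<sigma> q) q" using \<sigma> q Wint by blast+
      show "\<forall>s\<in>Af. f q = bf s + lin s q \<longrightarrow> s = \<sigma> q"
      proof (intro ballI impI)
        fix s assume "s \<in> Af" "f q = bf s + lin s q"
        moreover have "\<sigma> q \<in> Af" "f q = bf (\<sigma> q) + lin (\<sigma> q) q" using \<sigma> q Wint by blast+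
        ultimately show "s = \<sigma> q" using uniqW[OF q, rule_format, of s "\<sigma> q"] by blast
      qed
    qed
    have "\<sigma> constant_on U"
    proof (rule locally_constant_imp_constant[OF Ucon])
      fix a assume a: "a \<in> U"
      obtain r where r: "r > 0" "ball a r \<subseteq> interior \<Omega>" "\<forall>x\<in>ball a r. f x = bf (\<sigma> a) + lin (\<sigma> a) x"
        using loc a UW by blast
      have "\<forall>x\<in>U \<inter> ball a r. \<sigma> x = \<sigma> a"
      proof
        fix x assume x: "x \<in> U \<inter> ball a r"
        have xW: "x \<in> W" using x UW by blast
        have ai: "a \<in> interior \<Omega>" using a UW Wint by blast
        have sa: "\<sigma> a \<in> Af" using \<sigma>(1)[OF ai] .
        have xi: "x \<in> interior \<Omega>" using xW Wint by blast
        have "\<sigma> x \<in> Af" "f x = bf (\<sigma> x) + lin (\<sigma> x) x" using \<sigma>[OF xi] by blast+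
        moreover have "f x = bf (\<sigma> a) + lin (\<sigma> a) x" using r(3) x by blast
        ultimately show "\<sigma> x = \<sigma> a" using sa uniqW[OF xW, rule_format, of "\<sigma> x" "\<sigma> a"] by blast
      qed
      moreover have "openin (top_of_set U) (U \<inter> ball a r)" by (simp add: openin_open_Int)
      moreover have "a \<in> U \<inter> ball a r" using a r(1) by simp
      ultimately show "\<exists>T. openin (top_of_set U) T \<and> a \<in> T \<and> (\<forall>x\<in>T. \<sigma> x = \<sigma> a)"
        by blast
    qed
    then obtain s where sU: "\<forall>x\<in>U. \<sigma> x = s" unfolding constant_on_def by blast
    have u0i': "u0 \<in> interior \<Omega>" using u0 UW Wint by blast
    have sAf: "s \<in> Af" using \<sigma>(1)[OF u0i'] sU u0 by simp
    define lf where "lf x = bf s + lin s x" for x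
    have fU: "\<forall>x\<in>U. f x = lf x"
    proof
      fix x assume x: "x \<in> U"
      hence "x \<in> interior \<Omega>" using UW Wint by blast
      from \<sigma>(2)[OF this] show "f x = lf x" using sU x unfolding lf_def by simp
    qed
    have fl: "\<forall>x\<in>interior \<Omega>. f x \<le> lf x" using trf sAf unfolding trop_def lf_def by blast
    have lf_comb: "lf ((1 - t) *\<^sub>R x + t *\<^sub>R y) = (1 - t) * lf x + t * lf y" for t x y
      unfolding lf_def lin_def by (simp add: algebra_simps)
    have conc: "f ((1 - t) *\<^sub>R x + t *\<^sub>R y) \<ge> (1 - t) * f x + t * f y"
      if "x \<in> interior \<Omega>" "y \<in> interior \<Omega>" "0 \<le> t" "t \<le> 1" for x y t
    proof -
      have z: "(1 - t) *\<^sub>R x + t *\<^sub>R y \<in> interior \<Omega>"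
        using convexD[OF convex_interior[OF cvx] that(1,2), of "1-t" t] that by simp
      obtain r where r: "r \<in> Af" "f ((1 - t) *\<^sub>R x + t *\<^sub>R y) = bf r + lin r ((1 - t) *\<^sub>R x + t *\<^sub>R y)"
        using trf z unfolding trop_def by blast
      have "f x \<le> bf r + lin r x" "f y \<le> bf r + lin r y" using trf that r(1) unfolding trop_def by blast+
      hence "(1 - t) * f x + t * f y \<le> (1 - t) * (bf r + lin r x) + t * (bf r + lin r y)"
        using that by (intro add_mono mult_left_mono) auto
      also have "\<dots> = f ((1 - t) *\<^sub>R x + t *\<^sub>R y)" using r(2) by (simp add: lin_def algebra_simps)
      finally show ?thesis .
    qed
    define Z where "Z = {x\<in>interior \<Omega>. f x = lf x}"
    have Zconv: "convex Z"
    proof (rule convexI)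
      fix x y :: pt and u v :: real assume xy: "x \<in> Z" "y \<in> Z" and uv: "0 \<le> u" "0 \<le> v" "u + v = 1"
      have ueq: "u = 1 - v" using uv by simp
      have xi: "x \<in> interior \<Omega>" "y \<in> interior \<Omega>" using xy by (auto simp: Z_def)
      have z: "u *\<^sub>R x + v *\<^sub>R y \<in> interior \<Omega>"
        using convexD[OF convex_interior[OF cvx] xi] uv by blast
      have "f (u *\<^sub>R x + v *\<^sub>R y) \<ge> u * f x + v * f y"
        using conc[OF xi, of v] uv by (simp add: ueq)
      also have "u * f x + v * f y = lf (u *\<^sub>R x + v *\<^sub>R y)"
        using xy lf_comb[of v x y] by (simp add: Z_def ueq)
      finally have "lf (u *\<^sub>R x + v *\<^sub>R y) \<le> f (u *\<^sub>R x + v *\<^sub>R y)" .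
      moreover have "f (u *\<^sub>R x + v *\<^sub>R y) \<le> lf (u *\<^sub>R x + v *\<^sub>R y)" using fl z by blast
      ultimately show "u *\<^sub>R x + v *\<^sub>R y \<in> Z" using z unfolding Z_def by simp
    qed
    have UZ: "U \<subseteq> Z" using fU UW Wint unfolding Z_def by blast
    have UiZ: "U \<subseteq> interior Z" using interior_maximal[OF UZ Uopen] .
    have iZW: "interior Z \<subseteq> W"
    proof
      fix x assume x: "x \<in> interior Z"
      have sm: "smooth_on (interior Z) f"
        by (rule affine_smooth[of _ _ "bf s" s]) (use interior_subset[of Z] in \<open>auto simp: Z_def lf_def\<close>)
      have sub: "interior Z \<subseteq> interior \<Omega>" using interior_subset[of Z] unfolding Z_def by blast
      show "x \<in> W" using x sm sub unfolding W_def tcurve_def by blast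
    qed
    have iZU: "interior Z \<subseteq> U"
      by (rule components_maximal[OF Uc]) (use iZW UiZ u0 convex_connected[OF convex_interior[OF Zconv]] in auto)
    have ZclU: "Z \<subseteq> closure U"
    proof -
      have "interior Z \<noteq> {}" using UiZ u0 by blast
      hence "closure (interior Z) = closure Z" using convex_closure_interior[OF Zconv] by simp
      hence "Z \<subseteq> closure (interior Z)" using closure_subset[of Z] by simp
      also have "\<dots> \<subseteq> closure U" using iZU by (rule closure_mono)
      finally show ?thesis .
    qed
    have clUi: "closure U \<subseteq> interior \<Omega>"
    proof -
      have "closure U \<subseteq> closure (interior \<Omega>)" using UW Wint by (intro closure_mono) blast
      hence "closure U \<subseteq> \<Omega>" using clint by simp
      thus ?thesis using Ufr frint by blast
    qed
    have mnn: "0 \<le> bf r + lin r x" if r: "r \<in> Af" and x: "x \<in> \<Omega>" for r x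
    proof -
      have cl: "closed {x. 0 \<le> bf r + lin r x}"
        by (rule closed_Collect_le) (auto intro!: continuous_intros continuous_lin)
      have "interior \<Omega> \<subseteq> {x. 0 \<le> bf r + lin r x}"
        using trf r fnni unfolding trop_def by (fastforce intro: order_trans)
      hence "closure (interior \<Omega>) \<subseteq> {x. 0 \<le> bf r + lin r x}" using cl by (rule closure_minimal)
      thus ?thesis using x clint by blast
    qed
    show ?thesis
    proof (cases "\<exists>b0\<in>\<Omega>. lf b0 \<le> 0")
      case True
      then obtain b0 where b0: "b0 \<in> \<Omega>" "lf b0 \<le> 0" by blast
      have l0: "lf b0 = 0" using mnn[OF sAf b0(1)] b0(2) unfolding lf_def by simp
      have b0U: "b0 \<in> closure U"
      proof (cases "u0 = b0")
        case True then show ?thesis using u0 closure_subset by blast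
      next
        case False
        have u0i: "u0 \<in> interior \<Omega>" using u0 UW Wint by blast
        have seg: "open_segment u0 b0 \<subseteq> interior \<Omega>"
          using in_interior_closure_convex_segment[OF cvx u0i] b0(1) clint
          by (metis closure_subset subsetD clo closure_closed)
        have zin: "(1 - t) *\<^sub>R u0 + t *\<^sub>R b0 \<in> closure U" if t: "0 < t" "t < 1" for t
        proof -
          define z where "z = (1 - t) *\<^sub>R u0 + t *\<^sub>R b0"
          have c1: "z \<in> closed_segment u0 b0" unfolding z_def closed_segment_def
            using t by (intro CollectI exI[of _ t]) simp
          have "z - u0 = t *\<^sub>R (b0 - u0)" by (simp add: z_def algebra_simps)
          hence c2: "z \<noteq> u0" using t False by auto
          have "z - b0 = (1 - t) *\<^sub>R (u0 - b0)" by (simp add: z_def algebra_simps)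
          hence c3: "z \<noteq> b0" using t False by auto
          have "z \<in> open_segment u0 b0" unfolding open_segment_def using c1 c2 c3 by blast
          hence zi: "z \<in> interior \<Omega>" using seg by blast
          obtain r where r: "r \<in> Af" "f z = bf r + lin r z" using trf zi unfolding trop_def by blast
          have "f u0 \<le> bf r + lin r u0" using trf u0i r(1) unfolding trop_def by blast
          hence "(1 - t) * f u0 + t * 0 \<le> (1 - t) * (bf r + lin r u0) + t * (bf r + lin r b0)"
            using t mnn[OF r(1) b0(1)] by (intro add_mono mult_left_mono) auto
          also have "\<dots> = f z" using r(2) unfolding z_def by (simp add: lin_def algebra_simps)
          finally have "(1 - t) * f u0 \<le> f z" by simp
          moreover have "lf z = (1 - t) * lf u0" using lf_comb[of t u0 b0] l0 unfolding z_def by simp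
          moreover have "f u0 = lf u0" using fU u0 by blast
          ultimately have "lf z \<le> f z" by simp
          hence "z \<in> Z" using fl zi unfolding Z_def by force
          thus ?thesis using ZclU unfolding z_def by blast
        qed
        have "b0 \<in> closure (closure U)"
        proof (rule closure_approachable[THEN iffD2], intro allI impI)
          fix e :: real assume e: "e > 0"
          define \<tau> where "\<tau> = min (1/2) (e / (2 * (dist u0 b0 + 1)))"
          have dpos: "0 < 2 * (dist u0 b0 + 1)" by (smt (verit) zero_le_dist)
          have \<tau>: "0 < \<tau>" "\<tau> < 1" using e dpos by (auto simp: \<tau>_def)
          have "(1 - (1 - \<tau>)) *\<^sub>R u0 + (1 - \<tau>) *\<^sub>R b0 \<in> closure U" using zin[of "1 - \<tau>"] \<tau> by simp
          moreover have "dist ((1 - (1 - \<tau>)) *\<^sub>R u0 + (1 - \<tau>) *\<^sub>R b0) b0 = \<tau> * dist u0 b0"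
          proof -
            have "(1 - (1 - \<tau>)) *\<^sub>R u0 + (1 - \<tau>) *\<^sub>R b0 - b0 = \<tau> *\<^sub>R (u0 - b0)"
              by (simp add: algebra_simps)
            thus ?thesis using \<tau> by (simp add: dist_norm)
          qed
          moreover have "\<tau> * dist u0 b0 < e"
          proof -
            have "\<tau> * dist u0 b0 \<le> (e / (2 * (dist u0 b0 + 1))) * dist u0 b0"
              by (intro mult_right_mono) (auto simp: \<tau>_def)
            also have "\<dots> < e"
            proof -
              have "(e / (2 * (dist u0 b0 + 1))) * dist u0 b0 \<le> (e / (2 * (dist u0 b0 + 1))) * (dist u0 b0 + 1)"
                using e dpos by (intro mult_left_mono) auto
              also have "\<dots> = e / 2" using dpos by (simp add: field_simps)
              finally have "(e / (2 * (dist u0 b0 + 1))) * dist u0 b0 \<le> e / 2" .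
              then show ?thesis using e by linarith
            qed
            finally show ?thesis .
          qed
          ultimately show "\<exists>y\<in>closure U. dist y b0 < e" by metis
        qed
        thus ?thesis by simp
      qed
      have b0i: "b0 \<in> interior \<Omega>" using b0U clUi by blast
      obtain r where r: "r > 0" "ball b0 r \<subseteq> interior \<Omega>"
        using b0i open_contains_ball[of "interior \<Omega>"] by auto
      have lnn: "0 \<le> lf (b0 + t *\<^sub>R unit_dir k)" if "\<bar>t\<bar> < r" for t k
      proof -
        have "dist b0 (b0 + t *\<^sub>R unit_dir k) = \<bar>t\<bar>" by (simp add: dist_norm norm_unit_dir)
        hence "b0 + t *\<^sub>R unit_dir k \<in> interior \<Omega>" using that r(2) by auto
        thus ?thesis using fl fnni by force
      qed
      have "of_int (fst s) = (0::real)"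
      proof -
        have a: "0 \<le> lf (b0 + (r/2) *\<^sub>R unit_dir 0)" by (rule lnn) (use r(1) in simp)
        have b: "0 \<le> lf (b0 + (-r/2) *\<^sub>R unit_dir 0)" by (rule lnn) (use r(1) in simp)
        have eq: "lf (b0 + t *\<^sub>R unit_dir 0) = lf b0 + t * of_int (fst s)" for t
          unfolding lf_def by (simp add: lin_add lin_unit0)
        have "0 \<le> lf b0 + r/2 * of_int (fst s)" "0 \<le> lf b0 + -r/2 * of_int (fst s)"
          using a[unfolded eq] b[unfolded eq] by blast+
        hence "0 \<le> r/2 * of_int (fst s)" "0 \<le> -r/2 * of_int (fst s)"
          using l0 by simp_all
        hence "r/2 * of_int (fst s) = 0" by linarith
        thus ?thesis using r(1) by simp
      qed
      moreover have "of_int (snd s) = (0::real)"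
      proof -
        have a: "0 \<le> lf (b0 + (r/2) *\<^sub>R unit_dir (Suc 0))" by (rule lnn) (use r(1) in simp)
        have b: "0 \<le> lf (b0 + (-r/2) *\<^sub>R unit_dir (Suc 0))" by (rule lnn) (use r(1) in simp)
        have eq: "lf (b0 + t *\<^sub>R unit_dir (Suc 0)) = lf b0 + t * of_int (snd s)" for t
          unfolding lf_def by (simp add: lin_add lin_unit1)
        have "0 \<le> lf b0 + r/2 * of_int (snd s)" "0 \<le> lf b0 + -r/2 * of_int (snd s)"
          using a[unfolded eq] b[unfolded eq] by blast+
        hence "0 \<le> r/2 * of_int (snd s)" "0 \<le> -r/2 * of_int (snd s)"
          using l0 by simp_all
        hence "r/2 * of_int (snd s) = 0" by linarith
        thus ?thesis using r(1) by simp
      qed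
      ultimately have lins: "\<forall>x. lin s x = 0" by (simp add: lin_def)
      have "\<forall>x. lf x = 0" using l0 lins unfolding lf_def by simp
      hence "\<forall>x\<in>interior \<Omega>. f x = 0"
      proof (intro ballI)
        fix x assume z: "\<forall>x. lf x = 0" and x: "x \<in> interior \<Omega>"
        have "f x \<le> lf x" "0 \<le> f x" using fl fnni x by blast+
        then show "f x = 0" using z by simp
      qed
      from const_case[OF cpt cvx ine this] Ucomp Ufr show ?thesis by blast
    next
      case False
      hence lpos: "\<forall>x\<in>\<Omega>. 0 < lf x" by auto
      have One: "\<Omega> \<noteq> {}" using ine intsub by blast
      have "continuous_on \<Omega> lf" unfolding lf_def by (intro continuous_intros continuous_lin)
      then obtain xm where xm: "xm \<in> \<Omega>" "\<forall>y\<in>\<Omega>. lf xm \<le> lf y"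
        using continuous_attains_inf[OF cpt One] by blast
      define \<delta> where "\<delta> = lf xm"
      have \<delta>: "\<delta> > 0" "\<forall>y\<in>\<Omega>. \<delta> \<le> lf y" using xm lpos by (auto simp: \<delta>_def)
      show ?thesis
      proof (rule ccontr)
        assume "\<not> closure U \<inter> P \<noteq> {}"
        hence PU: "closure U \<inter> P = {}" by simp
        define hh where "hh x = lf x - f x" for x
        have hpos: "0 < hh p" if p: "p \<in> P" for p
        proof -
          have pi: "p \<in> interior \<Omega>" using p Pint by blast
          have "p \<notin> Z" using ZclU PU p by blast
          hence "f p \<noteq> lf p" using pi unfolding Z_def by blast
          thus ?thesis using fl pi unfolding hh_def by force
        qed
        define \<eta> where "\<eta> = (if P = {} then \<delta> else Min (hh ` P))"
        have \<eta>: "\<eta> > 0 \<and> (\<forall>p\<in>P. \<eta> \<le> hh p)"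
        proof (cases "P = {}")
          case True then show ?thesis using \<delta> by (simp add: \<eta>_def)
        next
          case False
          have "finite (hh ` P)" "hh ` P \<noteq> {}" using finP False by auto
          moreover have "\<forall>y\<in>hh ` P. 0 < y" using hpos by blast
          ultimately have "0 < Min (hh ` P)" by (simp add: Min_gr_iff)
          moreover have "\<forall>p\<in>P. Min (hh ` P) \<le> hh p" using finP by simp
          ultimately show ?thesis using False by (simp add: \<eta>_def)
        qed
        define \<epsilon> where "\<epsilon> = min \<delta> \<eta> / 2"
        have \<epsilon>: "\<epsilon> > 0" "\<epsilon> < \<delta>" "\<forall>p\<in>P. \<epsilon> < hh p"
          using \<delta> \<eta> unfolding \<epsilon>_def by force+
        have nbhd: "\<exists>d>0. ball p d \<subseteq> interior \<Omega> \<and> (\<forall>x\<in>ball p d. \<epsilon> < hh x)" if p: "p \<in> P" for p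
        proof -
          have pi: "p \<in> interior \<Omega>" using p Pint by blast
          have cf: "isCont f p" using trop_local[OF trf fnni pi] by blast
          have ch: "isCont hh p" unfolding hh_def lf_def
            by (intro continuous_intros cf isCont_lin)
          from order_tendstoD(1)[OF ch[unfolded isCont_def] \<epsilon>(3)[rule_format, OF p]]
          obtain d1 where d1: "d1 > 0" "\<forall>x. 0 < dist x p \<and> dist x p < d1 \<longrightarrow> \<epsilon> < hh x"
            unfolding eventually_at by auto
          obtain d2 where d2: "d2 > 0" "ball p d2 \<subseteq> interior \<Omega>"
            using pi open_contains_ball[of "interior \<Omega>"] by auto
          have "\<forall>x\<in>ball p (min d1 d2). \<epsilon> < hh x"
          proof
            fix x assume x: "x \<in> ball p (min d1 d2)"
            show "\<epsilon> < hh x"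
            proof (cases "x = p")
              case True then show ?thesis using \<epsilon>(3) p by blast
            next
              case False
              have "0 < dist x p \<and> dist x p < d1" using False x by (auto simp: dist_commute)
              then show ?thesis using d1(2) by blast
            qed
          qed
          moreover have "ball p (min d1 d2) \<subseteq> interior \<Omega>" using d2 by auto
          ultimately show ?thesis using d1 d2 by (intro exI[of _ "min d1 d2"]) auto
        qed
        define f' where "f' x = (if x \<in> interior \<Omega> then min (f x) (lf x - \<epsilon>) else f x)" for x
        define bf' where "bf' = bf(s := bf s - \<epsilon>)"
        have trf': "trop \<Omega> Af bf' f'"
          unfolding trop_def
        proof (rule ballI)
          fix x assume x: "x \<in> interior \<Omega>"
          have L1: "\<forall>r\<in>Af. f' x \<le> bf' r + lin r x"
          proof
            fix r assume r: "r \<in> Af"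
            show "f' x \<le> bf' r + lin r x"
            proof (cases "r = s")
              case True then show ?thesis using x by (simp add: f'_def bf'_def lf_def)
            next
              case False
              have "f x \<le> bf r + lin r x" using trf x r unfolding trop_def by blast
              then show ?thesis using x False by (simp add: f'_def bf'_def)
            qed
          qed
          have L2: "\<exists>r\<in>Af. f' x = bf' r + lin r x"
          proof (cases "f x \<le> lf x - \<epsilon>")
            case True
            obtain r where r: "r \<in> Af" "f x = bf r + lin r x" using trf x unfolding trop_def by blast
            have "r \<noteq> s" using r True \<epsilon>(1) unfolding lf_def by auto
            then show ?thesis using r True x by (auto simp: f'_def bf'_def)
          next
            case False
            then show ?thesis using x sAf by (auto simp: f'_def bf'_def lf_def)
          qed
          show "(\<exists>r\<in>Af. f' x = bf' r + lin r x) \<and> (\<forall>r\<in>Af. f' x \<le> bf' r + lin r x)"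
            using L1 L2 by blast
        qed
        have f'nn: "\<forall>x\<in>\<Omega>. 0 \<le> f' x"
        proof
          fix x assume x: "x \<in> \<Omega>"
          show "0 \<le> f' x"
          proof (cases "x \<in> interior \<Omega>")
            case True
            have "\<delta> \<le> lf x" using \<delta> x by blast
            then show ?thesis using True fnn[OF x] \<epsilon> by (simp add: f'_def)
          qed (use fnn x in \<open>simp add: f'_def\<close>)
        qed
        have f'fr: "\<forall>x\<in>frontier \<Omega>. f' x = 0"
          using ffr frint by (auto simp: f'_def)
        have f'F: "f' \<in> F"
        proof -
          have "tropical_series \<Omega> f'" using trop_to_tropical[OF trf' f'nn f'fr] .
          moreover have "P \<subseteq> tcurve \<Omega> f'"
          proof
            fix p assume p: "p \<in> P"
            obtain d where d: "d > 0" "ball p d \<subseteq> interior \<Omega>" "\<forall>x\<in>ball p d. \<epsilon> < hh x"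
              using nbhd[OF p] by blast
            have "\<forall>x\<in>ball p d. f' x = f x"
            proof
              fix x assume x: "x \<in> ball p d"
              have "\<epsilon> < hh x" "x \<in> interior \<Omega>" using d x by blast+
              thus "f' x = f x" by (simp add: f'_def hh_def)
            qed
            thus "p \<in> tcurve \<Omega> f'"
              using tcurve_local[of p \<Omega> f "ball p d" f'] PC p d(1) by auto
          qed
          ultimately show ?thesis using f'nn unfolding F_def V_def zero_fun_def by auto
        qed
        have u0i: "u0 \<in> interior \<Omega>" using u0 UW Wint by blast
        have "f u0 \<le> f' u0" using fle[OF _ f'F] u0i intsub by blast
        moreover have "f' u0 = f u0 - \<epsilon>" using u0i fU u0 \<epsilon>(1) by (simp add: f'_def)
        ultimately show False using \<epsilon>(1) by simp
      qed
    qed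
  qed
qed

end
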